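(* Let $\mathbb F$ be a field and let $P(s)\in\mathbb F[s]^{p\times q}$ be a matrix pencil of rank $1$. 1. If $P(s)$ has a nontrivial invariant factor, then there exist nonzero vectors $u\in\mathbb F^p$, $\bar v\in\mathbb F^q$ and nonzero pencils $\bar u(s)\in\mathbb F[s]^p$, $v(s)\in\mathbb F[s]^q$ such that $P(s)=uv(s)^T=\bar u(s)\bar v^T$. 2. If $P(s)$ has an infinite elementary divisor, then there exist nonzero vectors $u\in\mathbb F^p$, $v\in\mathbb F^q$ such that $P(s)=uv^T$. 3. If $P(s)$ has a positive column minimal index, then there exist a nonzero vector $u\in\mathbb F^p$ and a nonzero pencil $v(s)\in\mathbb F[s]^q$ such that $P(s)=uv(s)^T$. 4. If $P(s)$ has a positive row minimal index, then there exist a nonzero vector $v\in\mathbb F^q$ and a nonzero pencil $u(s)\in\mathbb F[s]^p$ such that $P(s)=u(s)v^T$.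
   Context: A matrix pencil is a polynomial matrix of degree at most $1$, $G(s)=G_0+sG_1$; a vector pencil in $\mathbb F[s]^p$ is a column vector of degree at most $1$. The rank of a pencil is its normal rank. Its Kronecker invariants (complete invariants under strict equivalence $G\mapsto QGR$, $Q,R$ invertible constant matrices) are the invariant factors (monic polynomials in $\mathbb F[s]$; "nontrivial" means of positive degree), the infinite elementary divisors $t^{k}$ with $k>0$, and the column and row minimal indices. *)

theory Defs
  imports "Jordan_Normal_Form.Determinant" "Jordan_Normal_Form.DL_Submatrix"
    "HOL-Computational_Algebra.Polynomial"
begin

definition is_pencil :: "'a::field poly mat \<Rightarrow> bool" where
  "is_pencil P \<longleftrightarrow> (\<forall>i<dim_row P. \<forall>j<dim_col P. degree (P $$ (i,j)) \<le> 1)"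

definition is_vec_pencil :: "'a::field poly vec \<Rightarrow> bool" where
  "is_vec_pencil v \<longleftrightarrow> (\<forall>i<dim_vec v. degree (v $ i) \<le> 1)"

definition const_vec :: "'a::field vec \<Rightarrow> 'a poly vec" where
  "const_vec u = map_vec (\<lambda>c. [:c:]) u"

definition outer :: "'a::comm_ring_1 vec \<Rightarrow> 'a vec \<Rightarrow> 'a mat" where
  "outer x y = mat (dim_vec x) (dim_vec y) (\<lambda>(i,j). x $ i * y $ j)"

definition minors :: "'a::comm_ring_1 mat \<Rightarrow> nat \<Rightarrow> 'a set" where
  "minors A k = {det (submatrix A I J) | I J. I \<subseteq> {..<dim_row A} \<and> J \<subseteq> {..<dim_col A}
                   \<and> card I = k \<and> card J = k}"

definition normal_rank :: "'a::field poly mat \<Rightarrow> nat" where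
  "normal_rank A = Max {k. \<exists>m \<in> minors A k. m \<noteq> 0}"

definition det_divisor :: "'a::field poly mat \<Rightarrow> nat \<Rightarrow> 'a poly" where
  "det_divisor A k =
     (if minors A k \<subseteq> {0} then 0
      else (THE d. lead_coeff d = 1 \<and> (\<forall>m\<in>minors A k. d dvd m) \<and>
                   (\<forall>e. (\<forall>m\<in>minors A k. e dvd m) \<longrightarrow> e dvd d)))"

definition invariant_factor :: "'a::field poly mat \<Rightarrow> nat \<Rightarrow> 'a poly" where
  "invariant_factor A k = det_divisor A k div det_divisor A (k - 1)"

definition has_nontrivial_invariant_factor :: "'a::field poly mat \<Rightarrow> bool" where
  "has_nontrivial_invariant_factor A \<longleftrightarrow>
     (\<exists>k\<in>{1..normal_rank A}. degree (invariant_factor A k) > 0)"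

text \<open>Reversal of a pencil G0 + s G1 is G1 + t G0; infinite elementary divisors of G
  are the elementary divisors t^k (k > 0) of the reversal at t = 0.\<close>
definition rev_pencil :: "'a::field poly mat \<Rightarrow> 'a poly mat" where
  "rev_pencil A = map_mat (\<lambda>f. [:coeff f 1, coeff f 0:]) A"

definition has_infinite_elementary_divisor :: "'a::field poly mat \<Rightarrow> bool" where
  "has_infinite_elementary_divisor A \<longleftrightarrow>
     (\<exists>k\<in>{1..normal_rank (rev_pencil A)}. [:0, 1:] dvd invariant_factor (rev_pencil A) k)"

definition vec_degree :: "'a::zero poly vec \<Rightarrow> nat" where
  "vec_degree x = Max (insert 0 {degree (x $ i) | i. i < dim_vec x})"

definition lin_comb :: "(nat \<Rightarrow> 'a::comm_ring_1) \<Rightarrow> 'a vec list \<Rightarrow> nat \<Rightarrow> 'a" where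
  "lin_comb c xs j = (\<Sum>i<length xs. c i * (xs ! i $ j))"

text \<open>xs is a polynomial basis of the rational right null space of A: the vectors are
  polynomial null vectors, linearly independent over F(s) (equivalently over F[s]),
  and span the null space over F(s) (every polynomial null vector becomes, after
  multiplication by a nonzero polynomial, an F[s]-combination of them).\<close>
definition right_null_poly_basis :: "'a::field poly mat \<Rightarrow> 'a poly vec list \<Rightarrow> bool" where
  "right_null_poly_basis A xs \<longleftrightarrow>
     (\<forall>x\<in>set xs. x \<in> carrier_vec (dim_col A) \<and> A *\<^sub>v x = 0\<^sub>v (dim_row A)) \<and>
     (\<forall>c. (\<forall>j<dim_col A. lin_comb c xs j = 0) \<longrightarrow> (\<forall>i<length xs. c i = 0)) \<and>
     (\<forall>y\<in>carrier_vec (dim_col A). A *\<^sub>v y = 0\<^sub>v (dim_row A) \<longrightarrow>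
        (\<exists>d c. d \<noteq> 0 \<and> (\<forall>j<dim_col A. d * y $ j = lin_comb c xs j)))"

definition right_minimal_basis :: "'a::field poly mat \<Rightarrow> 'a poly vec list \<Rightarrow> bool" where
  "right_minimal_basis A xs \<longleftrightarrow> right_null_poly_basis A xs \<and>
     (\<forall>ys. right_null_poly_basis A ys \<longrightarrow>
        (\<Sum>x\<leftarrow>xs. vec_degree x) \<le> (\<Sum>y\<leftarrow>ys. vec_degree y))"

definition column_minimal_indices :: "'a::field poly mat \<Rightarrow> nat multiset set" where
  "column_minimal_indices A = {mset (map vec_degree xs) | xs. right_minimal_basis A xs}"

definition row_minimal_indices :: "'a::field poly mat \<Rightarrow> nat multiset set" where
  "row_minimal_indices A = column_minimal_indices (transpose_mat A)"

definition has_pos_column_minimal_index :: "'a::field poly mat \<Rightarrow> bool" where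
  "has_pos_column_minimal_index A \<longleftrightarrow> (\<exists>M\<in>column_minimal_indices A. \<exists>e\<in>#M. e > 0)"

definition has_pos_row_minimal_index :: "'a::field poly mat \<Rightarrow> bool" where
  "has_pos_row_minimal_index A \<longleftrightarrow> (\<exists>M\<in>row_minimal_indices A. \<exists>e\<in>#M. e > 0)"

end

theory Submission
  imports Defs
begin

lemma det_1x1: assumes "A \<in> carrier_mat 1 1" shows "det A = A $$ (0,0)"
proof -
  have "mat_delete A 0 0 \<in> carrier_mat 0 0" using assms by (auto simp: mat_delete_def)
  then show ?thesis using laplace_expansion_row[OF assms, of 0] assms
    by (simp add: cofactor_def)
qed

lemma det_2x2: assumes "A \<in> carrier_mat 2 2"
  shows "det A = A $$ (0,0) * A $$ (1,1) - A $$ (0,1) * A $$ (1,0)"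
proof -
  have "det A = (\<Sum>j<2. A $$ (0,j) * cofactor A 0 j)"
    using laplace_expansion_row[OF assms, of 0] by simp
  also have "\<dots> = A $$ (0,0) * cofactor A 0 0 + A $$ (0,1) * cofactor A 0 1"
    by (simp add: numeral_2_eq_2)
  also have "cofactor A 0 0 = A $$ (1,1)"
    unfolding cofactor_def using assms by (simp add: det_1x1 mat_delete_def)
  also have "cofactor A 0 1 = - A $$ (1,0)"
    unfolding cofactor_def using assms by (simp add: det_1x1 mat_delete_def)
  finally show ?thesis by (simp add: algebra_simps)
qed


lemma sub_set_eq: "I \<subseteq> {..<n} \<Longrightarrow> {i. i < n \<and> i \<in> I} = I" by auto

lemma submatrix_carrier':
  assumes "I \<subseteq> {..<dim_row A}" "J \<subseteq> {..<dim_col A}"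
  shows "submatrix A I J \<in> carrier_mat (card I) (card J)"
proof (rule carrier_matI)
  show "dim_row (submatrix A I J) = card I" by (simp only: dim_submatrix sub_set_eq[OF assms(1)])
  show "dim_col (submatrix A I J) = card J" by (simp only: dim_submatrix sub_set_eq[OF assms(2)])
qed

lemma minors_0: "minors A 0 = {1}"
proof -
  have d: "det (submatrix A {} {}) = 1"
    using submatrix_carrier'[of "{}" A "{}"] by simp
  have e: "I = {}" if "card I = 0" "I \<subseteq> {..<n}" for I :: "nat set" and n
    using that finite_subset by fastforce
  show ?thesis
  proof
    show "minors A 0 \<subseteq> {1}"
    proof
      fix m assume "m \<in> minors A 0"
      then obtain I J where IJ: "m = det (submatrix A I J)" "I \<subseteq> {..<dim_row A}"
        "J \<subseteq> {..<dim_col A}" "card I = 0" "card J = 0" unfolding minors_def by blast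
      then have "I = {}" "J = {}" using e by blast+
      then show "m \<in> {1}" using IJ d by simp
    qed
    show "{1} \<subseteq> minors A 0" unfolding minors_def using d
      by (auto intro!: exI[of _ "{}"])
  qed
qed

lemma minors_1: "minors A 1 = {A $$ (i,j) | i j. i < dim_row A \<and> j < dim_col A}"
proof -
  have sub: "det (submatrix A {i} {j}) = A $$ (i,j)" if "i < dim_row A" "j < dim_col A" for i j
  proof -
    have c: "submatrix A {i} {j} \<in> carrier_mat 1 1"
      using submatrix_carrier'[of "{i}" A "{j}"] that by simp
    have "submatrix A {i} {j} $$ (card {a\<in>{i}. a < i}, card {a\<in>{j}. a < j}) = A $$ (i, j)"
      by (rule submatrix_index_card) (use that in auto)
    moreover have "card {a\<in>{i}. a < i} = 0" "card {a\<in>{j}. a < j} = 0" by auto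
    ultimately show ?thesis using det_1x1[OF c] by metis
  qed
  show ?thesis
  proof
    show "minors A 1 \<subseteq> {A $$ (i,j) | i j. i < dim_row A \<and> j < dim_col A}"
    proof
      fix m assume "m \<in> minors A 1"
      then obtain I J where IJ: "m = det (submatrix A I J)" "I \<subseteq> {..<dim_row A}"
        "J \<subseteq> {..<dim_col A}" "card I = 1" "card J = 1" unfolding minors_def by blast
      then obtain i j where "I = {i}" "J = {j}" by (meson card_1_singletonE)
      then show "m \<in> {A $$ (i,j) | i j. i < dim_row A \<and> j < dim_col A}"
        using IJ sub by auto
    qed
    show "{A $$ (i,j) | i j. i < dim_row A \<and> j < dim_col A} \<subseteq> minors A 1"
    proof
      fix m assume "m \<in> {A $$ (i,j) | i j. i < dim_row A \<and> j < dim_col A}"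
      then obtain i j where ij: "m = A $$ (i,j)" "i < dim_row A" "j < dim_col A" by blast
      then have m: "m = det (submatrix A {i} {j})" using sub by simp
      have "{i} \<subseteq> {..<dim_row A}" "{j} \<subseteq> {..<dim_col A}" "card {i} = 1" "card {j} = 1"
        using ij by auto
      then show "m \<in> minors A 1" unfolding minors_def using m by blast
    qed
  qed
qed

lemma minor_2:
  assumes "i < k" "k < dim_row A" "j < l" "l < dim_col A"
  shows "A $$ (i,j) * A $$ (k,l) - A $$ (i,l) * A $$ (k,j) \<in> minors A 2"
proof -
  let ?M = "submatrix A {i,k} {j,l}"
  have c: "?M \<in> carrier_mat 2 2"
    using submatrix_carrier'[of "{i,k}" A "{j,l}"] assms by (simp add: numeral_2_eq_2)
  have e: "?M $$ (card {a\<in>{i,k}. a < r}, card {a\<in>{j,l}. a < s}) = A $$ (r, s)"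
    if "r \<in> {i,k}" "s \<in> {j,l}" for r s
    by (rule submatrix_index_card) (use that assms in auto)
  have c1: "card {a\<in>{i,k}. a < i} = 0" "card {a\<in>{j,l}. a < j} = 0" using assms by auto
  have c2: "card {a\<in>{i,k}. a < k} = 1" "card {a\<in>{j,l}. a < l} = 1"
  proof -
    have "{a\<in>{i,k}. a < k} = {i}" "{a\<in>{j,l}. a < l} = {j}" using assms by auto
    then show "card {a\<in>{i,k}. a < k} = 1" "card {a\<in>{j,l}. a < l} = 1" by simp_all
  qed
  have "?M $$ (0,0) = A $$ (i,j)" using e[of i j] unfolding c1 by simp
  moreover have "?M $$ (0,1) = A $$ (i,l)" using e[of i l] unfolding c1 c2 by simp
  moreover have "?M $$ (1,0) = A $$ (k,j)" using e[of k j] unfolding c1 c2 by simp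
  moreover have "?M $$ (1,1) = A $$ (k,l)" using e[of k l] unfolding c2 by simp
  ultimately have "?M $$ (0,0) = A $$ (i,j)" "?M $$ (0,1) = A $$ (i,l)"
    "?M $$ (1,0) = A $$ (k,j)" "?M $$ (1,1) = A $$ (k,l)" by blast+
  then have d: "A $$ (i,j) * A $$ (k,l) - A $$ (i,l) * A $$ (k,j) = det ?M"
    using det_2x2[OF c] by simp
  have s: "{i,k} \<subseteq> {..<dim_row A}" "{j,l} \<subseteq> {..<dim_col A}" "card {i,k} = 2" "card {j,l} = 2"
    using assms by auto
  show ?thesis unfolding minors_def
    by (rule CollectI, rule exI[of _ "{i,k}"], rule exI[of _ "{j,l}"], intro conjI, fact d, fact s(1), fact s(2), fact s(3), fact s(4))
qed

lemma minors_big: assumes "k > dim_row A" shows "minors A k = {}"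
proof -
  have "False" if "m \<in> minors A k" for m
  proof -
    from that obtain I J where IJ: "I \<subseteq> {..<dim_row A}" "card I = k" unfolding minors_def by blast
    have "card I \<le> dim_row A" using card_mono[OF _ IJ(1)] by simp
    then show False using IJ assms by simp
  qed
  then show ?thesis by blast
qed

lemma det_prod_form:
  fixes M :: "'a::idom mat"
  assumes M: "M \<in> carrier_mat n n" and n: "n \<ge> 2"
    and e: "\<And>a b. a < n \<Longrightarrow> b < n \<Longrightarrow> M $$ (a,b) = f a * g b"
  shows "det M = 0"
proof -
  have zero_row: "det M = 0" if "r < n" "f r = 0" for r
  proof -
    have "multrow r 0 M = M"
    proof (rule eq_matI)
      fix i j assume "i < dim_row M" "j < dim_col M"
      then show "multrow r 0 M $$ (i, j) = M $$ (i, j)" using M that e by auto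
    qed (use M in auto)
    then show ?thesis using det_multrow[OF that(1) M, of 0] by simp
  qed
  have n01: "0 < n" "1 < n" using n by auto
  show ?thesis
  proof (cases "f 0 = 0 \<or> f 1 = 0")
    case True then show ?thesis using zero_row[OF n01(1)] zero_row[OF n01(2)] by blast
  next
    case False
    let ?M1 = "multrow 0 (f 1) M"
    let ?M2 = "multrow 1 (f 0) ?M1"
    have c1: "?M1 \<in> carrier_mat n n" using M by simp
    have c2: "?M2 \<in> carrier_mat n n" using M by simp
    have d: "det ?M2 = f 0 * (f 1 * det M)"
      using det_multrow[OF n01(2) c1, of "f 0"] det_multrow[OF n01(1) M, of "f 1"] by simp
    have "row ?M2 0 = row ?M2 1"
    proof (rule eq_vecI)
      fix b assume "b < dim_vec (row ?M2 1)"
      then have b: "b < n" using M by simp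
      have "?M2 $$ (0,b) = f 1 * (f 0 * g b)" using b M n01 e by simp
      moreover have "?M2 $$ (1,b) = f 0 * (f 1 * g b)" using b M n01 e by simp
      moreover have "row ?M2 0 $ b = ?M2 $$ (0,b)" "row ?M2 1 $ b = ?M2 $$ (1,b)" using b M n01 by auto
      ultimately show "row ?M2 0 $ b = row ?M2 1 $ b" by (metis mult.left_commute)
    qed (use M in simp)
    then have "det ?M2 = 0"
      using det_identical_rows[OF c2 _ n01] by simp
    then show ?thesis using d False by simp
  qed
qed

lemma outer_minors:
  fixes A :: "'a::idom mat"
  assumes e: "\<And>i j. i < dim_row A \<Longrightarrow> j < dim_col A \<Longrightarrow> A $$ (i,j) = x i * y j"
    and k: "k \<ge> 2" and m: "m \<in> minors A k"
  shows "m = 0"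
proof -
  from m obtain I J where IJ: "m = det (submatrix A I J)" "I \<subseteq> {..<dim_row A}"
        "J \<subseteq> {..<dim_col A}" "card I = k" "card J = k" unfolding minors_def by blast
  have c: "submatrix A I J \<in> carrier_mat k k" using submatrix_carrier'[OF IJ(2,3)] IJ by simp
  show ?thesis unfolding IJ(1)
  proof (rule det_prod_form[OF c k])
    fix a b assume ab: "a < k" "b < k"
    have "pick I a \<in> I" "pick J b \<in> J" using pick_in_set_le ab IJ by auto
    then have "pick I a < dim_row A" "pick J b < dim_col A" using IJ by auto
    moreover have "submatrix A I J $$ (a,b) = A $$ (pick I a, pick J b)"
      by (rule submatrix_index) (use ab IJ sub_set_eq[OF IJ(2)] sub_set_eq[OF IJ(3)] in auto)
    ultimately show "submatrix A I J $$ (a,b) = x (pick I a) * y (pick J b)" using e by simp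
  qed
qed

lemma lin_poly: "degree (f::'a::field poly) \<le> 1 \<Longrightarrow> f = [:coeff f 0, coeff f 1:]"
  by (rule poly_eqI) (auto simp: coeff_pCons coeff_eq_0 split: nat.splits)

lemma const_dvd: "c \<noteq> 0 \<Longrightarrow> [:c:] dvd (g::'a::field poly)"
proof -
  assume c: "c \<noteq> 0"
  have "g = [:c:] * smult (inverse c) g" using c by simp
  then show ?thesis by (rule dvdI)
qed

lemma monic_unique:
  fixes d d' :: "'a::field poly"
  assumes "lead_coeff d = 1" "lead_coeff d' = 1" "d dvd d'" "d' dvd d"
  shows "d = d'"
proof -
  obtain k where k: "d' = d * k" using assms(3) by blast
  obtain k' where k': "d = d' * k'" using assms(4) by blast
  have d0: "d \<noteq> 0" using assms(1) by auto
  have "d * 1 = d * (k * k')" using k k' by (metis mult.assoc mult_1_right)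
  then have "k * k' = 1" using d0 by (metis mult_left_cancel)
  then have "degree (k * k') = 0" by simp
  moreover have "k \<noteq> 0" "k' \<noteq> 0" using \<open>k * k' = 1\<close> by auto
  ultimately have "degree k = 0" by (simp add: degree_mult_eq)
  moreover have "lead_coeff k = 1" using assms(1,2) k by (simp add: lead_coeff_mult)
  ultimately have "k = [:coeff k 0:]" "coeff k 0 = 1" using lin_poly[of k] by (simp_all add: coeff_eq_0)
  then have "k = 1" by (simp add: one_pCons)
  then show ?thesis using k by simp
qed

lemma dvd_deg1_smult:
  fixes e m :: "'a::field poly"
  assumes "e dvd m" "degree e = 1" "degree m \<le> 1"
  shows "\<exists>c. m = smult c e"
proof (cases "m = 0")
  case True then show ?thesis by (intro exI[of _ 0]) simp
next
  case False
  obtain k where k: "m = e * k" using assms(1) by blast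
  have "k \<noteq> 0" "e \<noteq> 0" using False k by auto
  then have "degree m = 1 + degree k" using k assms(2) by (simp add: degree_mult_eq)
  then have "degree k = 0" using assms(3) by simp
  then have "k = [:coeff k 0:]" using lin_poly[of k] by (simp add: coeff_eq_0)
  then have "m = e * [:coeff k 0:]" using k by metis
  then have "m = smult (coeff k 0) e" by simp
  then show ?thesis by blast
qed

lemma monic_smult:
  fixes a :: "'a::field poly"
  assumes a0: "a \<noteq> 0"
  shows "lead_coeff (smult (inverse (lead_coeff a)) a) = 1"
  unfolding lead_coeff_smult using a0 by simp

lemma gcd_case1:
  fixes S :: "'a::field poly set"
  assumes a1: "a \<in> S" and a2: "degree a = 1" and a3: "\<forall>m\<in>S. \<exists>c. m = smult c a"
  shows "\<exists>d. lead_coeff d = 1 \<and> (\<forall>m\<in>S. d dvd m) \<and> (\<forall>e. (\<forall>m\<in>S. e dvd m) \<longrightarrow> e dvd d)"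
proof -
  have a0: "a \<noteq> 0" using a2 by auto
  define d where "d = smult (inverse (lead_coeff a)) a"
  have "lead_coeff d = 1" unfolding d_def by (rule monic_smult[OF a0])
  moreover have "d dvd m" if "m \<in> S" for m
  proof -
    from a3 that obtain c where "m = smult c a" by (elim ballE exE) auto
    have "d * [:c * lead_coeff a:] = smult (c * lead_coeff a) d" by simp
    also have "\<dots> = smult c a" unfolding d_def using a0 by (simp add: mult.assoc)
    finally have "m = d * [:c * lead_coeff a:]" using \<open>m = smult c a\<close> by simp
    then show ?thesis by (rule dvdI)
  qed
  moreover have "e dvd d" if "\<forall>m\<in>S. e dvd m" for e
  proof -
    have "e dvd a" using that a1 by blast
    then show ?thesis unfolding d_def by (rule dvd_smult)
  qed
  ultimately show ?thesis by blast
qed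

lemma gcd_exists:
  fixes S :: "'a::field poly set"
  assumes deg: "\<forall>s\<in>S. degree s \<le> 1" and s0: "s0 \<in> S" "s0 \<noteq> 0"
  shows "\<exists>d. lead_coeff d = 1 \<and> (\<forall>m\<in>S. d dvd m) \<and> (\<forall>e. (\<forall>m\<in>S. e dvd m) \<longrightarrow> e dvd d)"
proof (cases "\<exists>a\<in>S. degree a = 1 \<and> (\<forall>m\<in>S. \<exists>c. m = smult c a)")
  case True
  then show ?thesis using gcd_case1 by blast
next
  case False
  have "e dvd 1" if e: "\<forall>m\<in>S. e dvd m" for e
  proof -
    have es0: "e dvd s0" using e s0 by blast
    then have e0: "e \<noteq> 0" using s0 by auto
    have "degree e \<le> degree s0" using es0 s0 by (simp add: dvd_imp_degree_le)
    then have de: "degree e \<le> 1" using deg s0 by auto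
    show ?thesis
    proof (cases "degree e = 0")
      case True
      then have "e = [:coeff e 0:]" using lin_poly[of e] by (simp add: coeff_eq_0)
      moreover have "coeff e 0 \<noteq> 0" using e0 True by (metis leading_coeff_0_iff)
      ultimately show ?thesis using const_dvd by metis
    next
      case False2: False
      then have de1: "degree e = 1" using de by simp
      have "degree s0 \<le> 1" using deg s0 by simp
      then have "\<exists>c. s0 = smult c e" by (rule dvd_deg1_smult[OF es0 de1])
      then obtain c0 where c0: "s0 = smult c0 e" by (elim exE)
      then have c00: "c0 \<noteq> 0" using s0 by auto
      have ds0: "degree s0 = 1" using c0 c00 de1 by simp
      have "\<forall>m\<in>S. \<exists>c. m = smult c s0"
      proof
        fix m assume mS: "m \<in> S"
        have "e dvd m" "degree m \<le> 1" using mS e deg by simp_all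
        then have "\<exists>c. m = smult c e" using dvd_deg1_smult[OF _ de1] by simp
        then obtain c where "m = smult c e" by (elim exE)
        then have "m = smult (c / c0) s0" using c0 c00 by simp
        then show "\<exists>c. m = smult c s0" by blast
      qed
      then have "\<exists>a\<in>S. degree a = 1 \<and> (\<forall>m\<in>S. \<exists>c. m = smult c a)" using s0 ds0 by (intro bexI[of _ s0]) simp_all
      with False show ?thesis by (rule notE)
    qed
  qed
  then show ?thesis by (intro exI[of _ 1]) auto
qed

lemma det_divisor_props:
  fixes A :: "'a::field poly mat"
  assumes deg: "\<forall>s\<in>minors A k. degree s \<le> 1" and nz: "\<not> minors A k \<subseteq> {0}"
  shows "lead_coeff (det_divisor A k) = 1 \<and> (\<forall>m\<in>minors A k. det_divisor A k dvd m)"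
proof -
  let ?Q = "\<lambda>d. lead_coeff d = 1 \<and> (\<forall>m\<in>minors A k. d dvd m) \<and>
                   (\<forall>e. (\<forall>m\<in>minors A k. e dvd m) \<longrightarrow> e dvd d)"
  obtain s0 where "s0 \<in> minors A k" "s0 \<noteq> 0" using nz by blast
  then obtain d where d: "?Q d" using gcd_exists[OF deg] by blast
  have "\<exists>!d. ?Q d"
  proof (rule ex1I[of _ d])
    show "?Q d" by fact
    fix d' assume "?Q d'"
    then show "d' = d" using d monic_unique[of d' d] by blast
  qed
  then have "?Q (THE d. ?Q d)" by (rule theI')
  moreover have "det_divisor A k = (THE d. ?Q d)" unfolding det_divisor_def using nz by simp
  ultimately show ?thesis by simp
qed

lemma det_divisor_0: "det_divisor (A::'a::field poly mat) 0 = 1"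
proof -
  have "lead_coeff (det_divisor A 0) = 1 \<and> (\<forall>m\<in>minors A 0. det_divisor A 0 dvd m)"
    by (rule det_divisor_props) (auto simp: minors_0)
  then show ?thesis using monic_unique[of "det_divisor A 0" 1] by (simp add: minors_0)
qed

lemma invariant_factor_1: "invariant_factor (A::'a::field poly mat) 1 = det_divisor A 1"
  unfolding invariant_factor_def by (simp add: det_divisor_0)

lemma nr_finite: "finite {k. \<exists>m\<in>minors A k. m \<noteq> 0}"
proof (rule finite_subset)
  show "{k. \<exists>m\<in>minors A k. m \<noteq> 0} \<subseteq> {..dim_row A}"
    using minors_big by (force simp: not_le[symmetric])
qed simp

lemma nr_0: "0 \<in> {k. \<exists>m\<in>minors (A::'a::field poly mat) k. m \<noteq> 0}"
  by (simp add: minors_0)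

lemma nr_eq1:
  fixes A :: "'a::field poly mat"
  assumes "normal_rank A = 1"
  shows "minors A 2 \<subseteq> {0}" "\<not> minors A 1 \<subseteq> {0}"
proof -
  let ?S = "{k. \<exists>m\<in>minors A k. m \<noteq> 0}"
  have ne: "?S \<noteq> {}" using nr_0[of A] by blast
  show "minors A 2 \<subseteq> {0}"
  proof (rule ccontr)
    assume "\<not> minors A 2 \<subseteq> {0}"
    then have "2 \<in> ?S" by auto
    then have "2 \<le> Max ?S" using nr_finite[of A] by simp
    then show False using assms unfolding normal_rank_def by simp
  qed
  have "Max ?S \<in> ?S" using nr_finite[of A] ne by (rule Max_in)
  then show "\<not> minors A 1 \<subseteq> {0}" using assms unfolding normal_rank_def by auto
qed

lemma nr_le1:
  fixes A :: "'a::field poly mat"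
  assumes "\<And>k m. k \<ge> 2 \<Longrightarrow> m \<in> minors A k \<Longrightarrow> m = 0" and "normal_rank A \<ge> 1"
  shows "normal_rank A = 1" "\<not> minors A 1 \<subseteq> {0}"
proof -
  let ?S = "{k. \<exists>m\<in>minors A k. m \<noteq> 0}"
  have ne: "?S \<noteq> {}" using nr_0[of A] by blast
  have M: "Max ?S \<in> ?S" using nr_finite[of A] ne by (rule Max_in)
  then have "Max ?S < 2" using assms(1) by (force simp: not_less[symmetric])
  then show "normal_rank A = 1" using assms(2) unfolding normal_rank_def by simp
  then show "\<not> minors A 1 \<subseteq> {0}" using M unfolding normal_rank_def by auto
qed

definition formA :: "(nat \<Rightarrow> nat \<Rightarrow> 'a::field poly) \<Rightarrow> nat \<Rightarrow> nat \<Rightarrow> bool" where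
  "formA f p q \<longleftrightarrow> (\<exists>u v i0 j0. i0 < p \<and> j0 < q \<and> u i0 \<noteq> 0 \<and> v j0 \<noteq> 0 \<and>
     (\<forall>j<q. degree (v j) \<le> 1) \<and> (\<forall>i<p. \<forall>j<q. f i j = smult (u i) (v j)))"

definition formB :: "(nat \<Rightarrow> nat \<Rightarrow> 'a::field poly) \<Rightarrow> nat \<Rightarrow> nat \<Rightarrow> bool" where
  "formB f p q \<longleftrightarrow> formA (\<lambda>i j. f j i) q p"

lemma formA_from_col:
  fixes f :: "nat \<Rightarrow> nat \<Rightarrow> 'a::field poly"
  assumes R: "\<And>i j. i < p \<Longrightarrow> j < q \<Longrightarrow> f i j * f i0 j0 = f i j0 * f i0 j"
    and deg: "\<And>i j. i < p \<Longrightarrow> j < q \<Longrightarrow> degree (f i j) \<le> 1"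
    and ij0: "i0 < p" "j0 < q" and c: "f i0 j0 \<noteq> 0"
    and col: "\<And>i. i < p \<Longrightarrow> \<exists>k. f i j0 = smult k (f i0 j0)"
  shows "formA f p q"
proof -
  define c where "c = f i0 j0"
  define K where "K i = (SOME k. f i j0 = smult k c)" for i
  have K: "f i j0 = smult (K i) c" if "i < p" for i
    unfolding K_def using col[OF that] unfolding c_def[symmetric] by (rule someI_ex)
  have fe: "f i j = smult (K i) (f i0 j)" if "i < p" "j < q" for i j
  proof -
    have "f i j * c = c * smult (K i) (f i0 j)"
      using R[OF that] K[OF that(1)] unfolding c_def[symmetric] by (simp add: ac_simps)
    then have "c * f i j = c * smult (K i) (f i0 j)" by (simp add: ac_simps)
    moreover have "c \<noteq> 0" using c unfolding c_def .
    ultimately show ?thesis using mult_left_cancel by metis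
  qed
  have F1: "K i0 \<noteq> 0"
  proof
    assume "K i0 = 0"
    then have "c = 0" using K[OF ij0(1)] unfolding c_def by simp
    then show False using c unfolding c_def by simp
  qed
  have F2: "f i0 j0 \<noteq> 0" using c .
  have F3: "\<forall>j<q. degree (f i0 j) \<le> 1" using deg ij0 by simp
  have F4: "\<forall>i<p. \<forall>j<q. f i j = smult (K i) (f i0 j)" using fe by (intro allI impI)
  show ?thesis unfolding formA_def
    by (rule exI[of _ K], rule exI[of _ "\<lambda>j. f i0 j"], rule exI[of _ i0], rule exI[of _ j0])
      (intro conjI; fact)
qed

lemma root_share:
  fixes g c :: "'a::field poly"
  assumes "degree g \<le> 1" "degree c = 1" "poly g r = 0" "poly c r = 0"
  shows "\<exists>k. g = smult k c"
proof -
  have e1: "degree [:-r, 1:] = 1" by simp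
  have "[:-r,1:] dvd g" "[:-r,1:] dvd c" using assms(3,4) by (simp_all add: poly_eq_0_iff_dvd)
  then have "\<exists>a. g = smult a [:-r,1:]" "\<exists>b. c = smult b [:-r,1:]"
    using dvd_deg1_smult[OF _ e1] assms(1,2) by simp_all
  then obtain a b where ab: "g = smult a [:-r,1:]" "c = smult b [:-r,1:]" by (elim exE)
  then have "b \<noteq> 0" using assms(2) by auto
  then have "g = smult (a / b) c" using ab by simp
  then show ?thesis by (rule exI)
qed

lemma dichotomy:
  fixes f :: "nat \<Rightarrow> nat \<Rightarrow> 'a::field poly"
  assumes R: "\<And>i j. i < p \<Longrightarrow> j < q \<Longrightarrow> f i j * f i0 j0 = f i j0 * f i0 j"
    and deg: "\<And>i j. i < p \<Longrightarrow> j < q \<Longrightarrow> degree (f i j) \<le> 1"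
    and ij0: "i0 < p" "j0 < q" and c: "f i0 j0 \<noteq> 0"
  shows "(\<forall>i<p. \<exists>k. f i j0 = smult k (f i0 j0)) \<or> (\<forall>j<q. \<exists>k. f i0 j = smult k (f i0 j0))"
proof -
  define c where "c = f i0 j0"
  have c0: "c \<noteq> 0" using c unfolding c_def .
  have dc: "degree c \<le> 1" unfolding c_def using deg ij0 by simp
  have Rc: "f i j * c = f i j0 * f i0 j" if "i < p" "j < q" for i j using R[OF that] unfolding c_def .
  show ?thesis unfolding c_def[symmetric]
  proof (cases "degree c = 0")
    case True
    have cc: "c = [:coeff c 0:]" using lin_poly[OF dc] True by (simp add: coeff_eq_0)
    have cn: "coeff c 0 \<noteq> 0" using c0 cc by (metis pCons_0_0)
    have constm: "\<exists>k. g = smult k c" if "degree g = 0" for g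
    proof -
      have "g = [:coeff g 0:]" using lin_poly[of g] that by (simp add: coeff_eq_0)
      then have "g = smult (coeff g 0 / coeff c 0) c" using cn by (subst cc) simp
      then show ?thesis by (rule exI)
    qed
    show "(\<forall>i<p. \<exists>k. f i j0 = smult k c) \<or> (\<forall>j<q. \<exists>k. f i0 j = smult k c)"
    proof (cases "\<forall>i<p. degree (f i j0) = 0")
      case True
      then show ?thesis using constm by blast
    next
      case False
      then obtain i1 where i1: "i1 < p" "degree (f i1 j0) \<noteq> 0" by blast
      have "degree (f i0 j) = 0" if j: "j < q" for j
      proof (rule ccontr)
        assume nz: "degree (f i0 j) \<noteq> 0"
        then have "f i0 j \<noteq> 0" by auto
        moreover have "f i1 j0 \<noteq> 0" using i1 by auto
        ultimately have "degree (f i1 j0 * f i0 j) = degree (f i1 j0) + degree (f i0 j)"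
          by (simp add: degree_mult_eq)
        also have "\<dots> \<ge> 2" using nz i1 by simp
        finally have "degree (f i1 j * c) \<ge> 2" using Rc[OF i1(1) j] by simp
        moreover have "degree (f i1 j * c) \<le> degree (f i1 j) + degree c" by (rule degree_mult_le)
        ultimately show False using deg[OF i1(1) j] True by simp
      qed
      then show ?thesis using constm by blast
    qed
  next
    case False
    then have d1: "degree c = 1" using dc by simp
    define r where "r = - coeff c 0 / coeff c 1"
    have "coeff c (degree c) \<noteq> 0" using c0 by simp
    then have c1: "coeff c 1 \<noteq> 0" using d1 by simp
    obtain a b where ab: "c = [:a, b:]"
      by (rule that[of "coeff c 0" "coeff c 1"]) (rule lin_poly[OF dc])
    have b: "b \<noteq> 0" "coeff c 0 = a" "coeff c 1 = b" using c1 ab by auto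
    have pr: "poly c r = 0" unfolding r_def b(2,3) using b(1) ab by simp
    show "(\<forall>i<p. \<exists>k. f i j0 = smult k c) \<or> (\<forall>j<q. \<exists>k. f i0 j = smult k c)"
    proof (cases "\<forall>i<p. poly (f i j0) r = 0")
      case True
      then show ?thesis using root_share[OF _ d1 _ pr] deg ij0 by simp
    next
      case False
      then obtain i1 where i1: "i1 < p" "poly (f i1 j0) r \<noteq> 0" by blast
      have "poly (f i0 j) r = 0" if j: "j < q" for j
      proof -
        have "poly (f i1 j * c) r = poly (f i1 j0 * f i0 j) r" using Rc[OF i1(1) j] by simp
        then have "poly (f i1 j0) r * poly (f i0 j) r = 0" using pr by simp
        then show ?thesis using i1 by simp
      qed
      then show ?thesis using root_share[OF _ d1 _ pr] deg ij0 by simp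
    qed
  qed
qed

lemma structure_fun:
  fixes f :: "nat \<Rightarrow> nat \<Rightarrow> 'a::field poly"
  assumes R: "\<And>i j k l. i < p \<Longrightarrow> k < p \<Longrightarrow> j < q \<Longrightarrow> l < q \<Longrightarrow> f i j * f k l = f i l * f k j"
    and deg: "\<And>i j. i < p \<Longrightarrow> j < q \<Longrightarrow> degree (f i j) \<le> 1"
    and ij0: "i0 < p" "j0 < q" and c: "f i0 j0 \<noteq> 0"
  shows "formA f p q \<or> formB f p q"
proof -
  have R1: "f i j * f i0 j0 = f i j0 * f i0 j" if "i < p" "j < q" for i j
    using R[OF that(1) ij0(1) that(2) ij0(2)] .
  have R2: "f j i * f i0 j0 = f i0 i * f j j0" if "i < q" "j < p" for i j
    using R1[OF that(2) that(1)] by (simp add: ac_simps)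
  consider "\<forall>i<p. \<exists>k. f i j0 = smult k (f i0 j0)" | "\<forall>j<q. \<exists>k. f i0 j = smult k (f i0 j0)"
    using dichotomy[of p q f i0 j0, OF R1 deg ij0 c] by blast
  then show ?thesis
  proof cases
    case 1
    then have "formA f p q" using formA_from_col[of p q f i0 j0, OF R1 deg ij0 c] by simp
    then show ?thesis by simp
  next
    case 2
    have "formA (\<lambda>i j. f j i) q p"
      by (rule formA_from_col[of q p "\<lambda>i j. f j i" j0 i0]) (use R2 deg ij0 c 2 in simp_all)
    then show ?thesis unfolding formB_def by simp
  qed
qed

lemma R_lt:
  fixes A :: "'a::comm_ring_1 mat"
  assumes z: "minors A 2 \<subseteq> {0}" and ik: "i < k" "k < dim_row A" and jl: "j < dim_col A" "l < dim_col A"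
  shows "A $$ (i,j) * A $$ (k,l) = A $$ (i,l) * A $$ (k,j)"
proof -
  consider "j < l" | "j = l" | "l < j" by linarith
  then show ?thesis
  proof cases
    case 1
    then have "A $$ (i,j) * A $$ (k,l) - A $$ (i,l) * A $$ (k,j) \<in> minors A 2"
      using minor_2 ik jl by blast
    then show ?thesis using z by auto
  next
    case 2 then show ?thesis by simp
  next
    case 3
    then have "A $$ (i,l) * A $$ (k,j) - A $$ (i,j) * A $$ (k,l) \<in> minors A 2"
      using minor_2 ik jl by blast
    then show ?thesis using z by auto
  qed
qed

lemma R_all:
  fixes A :: "'a::comm_ring_1 mat"
  assumes z: "minors A 2 \<subseteq> {0}" and ik: "i < dim_row A" "k < dim_row A" and jl: "j < dim_col A" "l < dim_col A"
  shows "A $$ (i,j) * A $$ (k,l) = A $$ (i,l) * A $$ (k,j)"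
proof -
  consider "i < k" | "i = k" | "k < i" by linarith
  then show ?thesis
  proof cases
    case 1 then show ?thesis using R_lt[OF z _ _ jl] ik by blast
  next
    case 2 then show ?thesis by (simp add: ac_simps)
  next
    case 3
    then have "A $$ (k,j) * A $$ (i,l) = A $$ (k,l) * A $$ (i,j)" using R_lt[OF z _ _ jl] ik by blast
    then show ?thesis by (simp add: ac_simps)
  qed
qed

lemma struct_P:
  fixes P :: "'a::field poly mat"
  assumes P: "P \<in> carrier_mat p q" and pen: "is_pencil P" and nr: "normal_rank P = 1"
  shows "formA (\<lambda>i j. P $$ (i,j)) p q \<or> formB (\<lambda>i j. P $$ (i,j)) p q"
proof -
  have z: "minors P 2 \<subseteq> {0}" and nz: "\<not> minors P 1 \<subseteq> {0}" using nr_eq1[OF nr] by auto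
  then obtain i0 j0 where ij0: "i0 < p" "j0 < q" "P $$ (i0,j0) \<noteq> 0" using P unfolding minors_1 by auto
  show ?thesis
  proof (rule structure_fun[of p q "\<lambda>i j. P $$ (i,j)" i0 j0, OF _ _ ij0])
    fix i j k l assume "i < p" "k < p" "j < q" "l < q"
    then show "P $$ (i,j) * P $$ (k,l) = P $$ (i,l) * P $$ (k,j)" using R_all[OF z] P by auto
  next
    fix i j assume "i < p" "j < q"
    then show "degree (P $$ (i,j)) \<le> 1" using pen P unfolding is_pencil_def by auto
  qed
qed

lemma formA_cong:
  assumes "formA f p q" "\<And>i j. i < p \<Longrightarrow> j < q \<Longrightarrow> f i j = g i j"
  shows "formA g p q"
proof -
  obtain u v i0 j0 where uv: "i0 < p" "j0 < q" "u i0 \<noteq> 0" "v j0 \<noteq> 0"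
    "\<forall>j<q. degree (v j) \<le> 1" "\<forall>i<p. \<forall>j<q. f i j = smult (u i) (v j)"
    using assms(1) unfolding formA_def by blast
  have G: "\<forall>i<p. \<forall>j<q. g i j = smult (u i) (v j)" using uv(6) assms(2) by simp
  show ?thesis unfolding formA_def
    by (rule exI[of _ u], rule exI[of _ v], rule exI[of _ i0], rule exI[of _ j0]) (use G uv(1-5) in simp)
qed

definition formAB :: "(nat \<Rightarrow> nat \<Rightarrow> 'a::field poly) \<Rightarrow> nat \<Rightarrow> nat \<Rightarrow> bool" where
  "formAB f p q \<longleftrightarrow> (\<exists>u v ub vb. (\<forall>i<p. \<forall>j<q. f i j = smult (u i) (v j) \<and> f i j = smult (vb j) (ub i)) \<and>
     (\<exists>i0<p. u i0 \<noteq> 0) \<and> (\<exists>i0<p. ub i0 \<noteq> 0) \<and> (\<exists>j0<q. vb j0 \<noteq> 0) \<and> (\<exists>j0<q. v j0 \<noteq> 0) \<and>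
     (\<forall>i<p. degree (ub i) \<le> 1) \<and> (\<forall>j<q. degree (v j) \<le> 1))"

lemma formAB_sym: "formAB (\<lambda>i j. f j i) q p \<Longrightarrow> formAB f p q"
proof -
  assume "formAB (\<lambda>i j. f j i) q p"
  then obtain u v ub vb where H: "\<forall>i<q. \<forall>j<p. f j i = smult (u i) (v j) \<and> f j i = smult (vb j) (ub i)"
     "\<exists>i0<q. u i0 \<noteq> 0" "\<exists>i0<q. ub i0 \<noteq> 0" "\<exists>j0<p. vb j0 \<noteq> 0" "\<exists>j0<p. v j0 \<noteq> 0"
     "\<forall>i<q. degree (ub i) \<le> 1" "\<forall>j<p. degree (v j) \<le> 1" unfolding formAB_def by blast
  have G: "\<forall>i<p. \<forall>j<q. f i j = smult (vb i) (ub j) \<and> f i j = smult (u j) (v i)"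
  proof (intro allI impI)
    fix i j assume ij: "i < p" "j < q"
    note h = H(1)[rule_format, OF ij(2) ij(1)]
    show "f i j = smult (vb i) (ub j) \<and> f i j = smult (u j) (v i)"
      using conjunct2[OF h] conjunct1[OF h] by (rule conjI)
  qed
  show ?thesis unfolding formAB_def
    by (rule exI[of _ vb], rule exI[of _ ub], rule exI[of _ v], rule exI[of _ u]) (intro conjI; fact)
qed

lemma part1_fun:
  fixes f :: "nat \<Rightarrow> nat \<Rightarrow> 'a::field poly"
  assumes A: "formA f p q" and dv: "\<And>i j. i < p \<Longrightarrow> j < q \<Longrightarrow> d dvd f i j" and dd: "degree d > 0"
  shows "formAB f p q"
proof -
  obtain u v i0 j0 where uv: "i0 < p" "j0 < q" "u i0 \<noteq> 0" "v j0 \<noteq> 0"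
    "\<forall>j<q. degree (v j) \<le> 1" "\<forall>i<p. \<forall>j<q. f i j = smult (u i) (v j)"
    using A unfolding formA_def by blast
  have dvj: "d dvd v j" if "j < q" for j
  proof -
    have "d dvd f i0 j" using dv uv(1) that by simp
    then have "d dvd smult (inverse (u i0)) (f i0 j)" by (rule dvd_smult)
    moreover have "smult (inverse (u i0)) (f i0 j) = v j" using uv(3,6) uv(1) that by simp
    ultimately show ?thesis by simp
  qed
  have "degree d \<le> degree (v j0)" using dvj[OF uv(2)] uv(4) by (simp add: dvd_imp_degree_le)
  moreover have "degree (v j0) \<le> 1" using uv(5) uv(2) by simp
  ultimately have d1: "degree d = 1" using dd by linarith
  define w where "w j = (SOME c. v j = smult c d)" for j
  have w: "v j = smult (w j) d" if "j < q" for j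
  proof -
    have "\<exists>c. v j = smult c d" by (rule dvd_deg1_smult[OF dvj[OF that] d1]) (use uv(5) that in simp)
    then show ?thesis unfolding w_def by (rule someI_ex)
  qed
  have d0: "d \<noteq> 0" using d1 by auto
  have F1: "\<forall>i<p. \<forall>j<q. f i j = smult (u i) (v j) \<and> f i j = smult (w j) (smult (u i) d)"
    using uv(6) w by (simp add: ac_simps)
  have F2: "\<exists>i0<p. u i0 \<noteq> 0" using uv by blast
  have F3: "\<exists>i0<p. smult (u i0) d \<noteq> 0" using uv d0 by auto
  have "w j0 \<noteq> 0" using w[OF uv(2)] uv(4) by auto
  then have F4: "\<exists>j0<q. w j0 \<noteq> 0" using uv(2) by blast
  have F5: "\<exists>j0<q. v j0 \<noteq> 0" using uv by blast
  have F6: "\<forall>i<p. degree (smult (u i) d) \<le> 1" using d1 by (simp add: degree_smult_le le_trans)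
  show ?thesis unfolding formAB_def
    by (rule exI[of _ u], rule exI[of _ v], rule exI[of _ "\<lambda>i. smult (u i) d"], rule exI[of _ w])
      (use F1 F2 F3 F4 F5 F6 uv(5) in blast)
qed

definition formC :: "(nat \<Rightarrow> nat \<Rightarrow> 'a::field poly) \<Rightarrow> nat \<Rightarrow> nat \<Rightarrow> bool" where
  "formC f p q \<longleftrightarrow> (\<exists>u w i0 j0. i0 < p \<and> j0 < q \<and> u i0 \<noteq> 0 \<and> w j0 \<noteq> 0 \<and>
     (\<forall>i<p. \<forall>j<q. f i j = [:u i * w j:]))"

lemma formC_sym: "formC (\<lambda>i j. f j i) q p \<Longrightarrow> formC f p q"
proof -
  assume "formC (\<lambda>i j. f j i) q p"
  then obtain u w i0 j0 where H: "i0 < q" "j0 < p" "u i0 \<noteq> 0" "w j0 \<noteq> 0"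
     "\<forall>i<q. \<forall>j<p. f j i = [:u i * w j:]" unfolding formC_def by blast
  have G: "\<forall>i<p. \<forall>j<q. f i j = [:w i * u j:]" using H(5) by (simp add: mult.commute)
  show ?thesis unfolding formC_def
    by (rule exI[of _ w], rule exI[of _ u], rule exI[of _ j0], rule exI[of _ i0]) (use G H(1-4) in simp)
qed

lemma part2_fun:
  fixes f :: "nat \<Rightarrow> nat \<Rightarrow> 'a::field poly"
  assumes A: "formA f p q" and c1: "\<And>i j. i < p \<Longrightarrow> j < q \<Longrightarrow> coeff (f i j) 1 = 0"
  shows "formC f p q"
proof -
  obtain u v i0 j0 where uv: "i0 < p" "j0 < q" "u i0 \<noteq> 0" "v j0 \<noteq> 0"
    "\<forall>j<q. degree (v j) \<le> 1" "\<forall>i<p. \<forall>j<q. f i j = smult (u i) (v j)"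
    using A unfolding formA_def by blast
  have vc: "v j = [:coeff (v j) 0:]" if "j < q" for j
  proof -
    have "coeff (f i0 j) 1 = 0" using c1 uv(1) that by simp
    then have "u i0 * coeff (v j) 1 = 0" using uv(6) uv(1) that by simp
    then have "coeff (v j) 1 = 0" using uv(3) by simp
    then show ?thesis using lin_poly[of "v j"] uv(5) that by simp
  qed
  have F1: "\<forall>i<p. \<forall>j<q. f i j = [:u i * coeff (v j) 0:]"
  proof (intro allI impI)
    fix i j assume "i < p" "j < q"
    then have "f i j = smult (u i) [:coeff (v j) 0:]" using uv(6) vc by metis
    then show "f i j = [:u i * coeff (v j) 0:]" by simp
  qed
  have G: "coeff (v j0) 0 \<noteq> 0" using vc[OF uv(2)] uv(4) by (metis pCons_0_0)
  show ?thesis unfolding formC_def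
    by (rule exI[of _ u], rule exI[of _ "\<lambda>j. coeff (v j) 0"], rule exI[of _ i0], rule exI[of _ j0]) (use G uv(1,2,3) F1 in simp)
qed

lemma smult_sum_right: "smult a (sum f S) = (\<Sum>x\<in>S. smult a (f x))"
  by (induct S rule: infinite_finite_induct) (simp_all add: smult_add_right)

lemma sum_nth_distinct:
  assumes "distinct js"
  shows "(\<Sum>i<length js. h (js ! i)) = sum h (set js)"
proof -
  have "(\<Sum>i<length js. h (js ! i)) = (\<Sum>i = 0..<length (map h js). map h js ! i)"
    by (simp add: atLeast0LessThan)
  also have "\<dots> = sum_list (map h js)" by (rule sum_list_sum_nth[symmetric])
  also have "\<dots> = sum h (set js)" by (rule sum_list_distinct_conv_sum_set[OF assms])
  finally show ?thesis .
qed

lemma vec_degree_const: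
  assumes "\<And>i. i < dim_vec x \<Longrightarrow> degree (x $ i) = 0"
  shows "vec_degree x = 0"
proof -
  have "{degree (x $ i) | i. i < dim_vec x} \<subseteq> {0}" using assms by auto
  then have "insert 0 {degree (x $ i) | i. i < dim_vec x} = {0}" by blast
  then show ?thesis unfolding vec_degree_def by (metis Max_singleton)
qed

lemma L:
  fixes A :: "'a::field poly mat"
  assumes A: "A \<in> carrier_mat m n" and B: "formB (\<lambda>i j. A $$ (i,j)) m n"
  shows "\<not> has_pos_column_minimal_index A"
proof -
  obtain u v c0 r0 where uv: "c0 < n" "r0 < m" "u c0 \<noteq> 0" "v r0 \<noteq> 0"
    "\<forall>i<n. \<forall>j<m. A $$ (j,i) = smult (u i) (v j)"
    using B unfolding formB_def formA_def by blast
  have dims: "dim_row A = m" "dim_col A = n" using A by auto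
  define S where "S y = (\<Sum>t\<in>{0..<n}. smult (u t) (y $ t))" for y :: "'a poly vec"
  have mv: "(A *\<^sub>v y) $ i = v i * S y" if "y \<in> carrier_vec n" "i < m" for y i
  proof -
    have "(A *\<^sub>v y) $ i = (\<Sum>t\<in>{0..<n}. row A i $ t * y $ t)"
      using that dims by (simp add: scalar_prod_def)
    also have "\<dots> = (\<Sum>t\<in>{0..<n}. v i * smult (u t) (y $ t))"
    proof (rule sum.cong)
      fix t assume "t \<in> {0..<n}"
      then have "row A i $ t = smult (u t) (v i)" using that dims uv(5) by simp
      then show "row A i $ t * y $ t = v i * smult (u t) (y $ t)" by (simp add: ac_simps)
    qed simp
    also have "\<dots> = v i * S y" unfolding S_def by (simp add: sum_distrib_left)
    finally show ?thesis .
  qed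
  have null: "A *\<^sub>v y = 0\<^sub>v m \<longleftrightarrow> S y = 0" if y: "y \<in> carrier_vec n" for y
  proof
    assume "A *\<^sub>v y = 0\<^sub>v m"
    then have "(A *\<^sub>v y) $ r0 = 0" using uv(2) by simp
    then have "v r0 * S y = 0" using mv[OF y uv(2)] by simp
    then show "S y = 0" using uv(4) by simp
  next
    assume S0: "S y = 0"
    show "A *\<^sub>v y = 0\<^sub>v m"
    proof (rule eq_vecI)
      fix i assume "i < dim_vec (0\<^sub>v m :: 'a poly vec)"
      then have "i < m" by simp
      then show "(A *\<^sub>v y) $ i = 0\<^sub>v m $ i" using mv[OF y] S0 by simp
    qed (use dims in simp)
  qed
  define js where "js = filter (\<lambda>j. j \<noteq> c0) [0..<n]"
  define b where "b j = vec n (\<lambda>t. if t = j then 1 else if t = c0 then [:- u j / u c0:] else 0)" for j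
  define xs where "xs = map b js"
  have setjs: "set js = {0..<n} - {c0}" unfolding js_def by auto
  have djs: "distinct js" unfolding js_def by simp
  have lxs: "length xs = length js" unfolding xs_def by simp
  have xsi: "xs ! i = b (js ! i)" if "i < length js" for i unfolding xs_def using that by simp
  have bcar: "b j \<in> carrier_vec n" for j unfolding b_def by simp
  have Sb: "S (b j) = 0" if "j \<in> set js" for j
  proof -
    have j: "j < n" "j \<noteq> c0" using that setjs by auto
    have "S (b j) = (\<Sum>t\<in>{0..<n}. (if t = j then [:u j:] else 0) + (if t = c0 then - [:u j:] else 0))"
      unfolding S_def
    proof (rule sum.cong)
      fix t assume "t \<in> {0..<n}"
      then show "smult (u t) (b j $ t) = (if t = j then [:u j:] else 0) + (if t = c0 then - [:u j:] else 0)"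
        unfolding b_def using j uv(3) by auto
    qed simp
    also have "\<dots> = 0" using j uv(1) by (simp add: sum.distrib)
    finally show ?thesis .
  qed
  have vd: "vec_degree (b j) = 0" for j
    by (rule vec_degree_const) (simp add: b_def)
  have basis: "right_null_poly_basis A xs"
    unfolding right_null_poly_basis_def dims
  proof (intro conjI)
    show "\<forall>x\<in>set xs. x \<in> carrier_vec n \<and> A *\<^sub>v x = 0\<^sub>v m"
      unfolding xs_def using bcar null Sb by auto
    show "\<forall>c. (\<forall>j<n. lin_comb c xs j = 0) \<longrightarrow> (\<forall>i<length xs. c i = 0)"
    proof (intro allI impI)
      fix c k assume lc: "\<forall>j<n. lin_comb c xs j = 0" and k: "k < length xs"
      then have k': "k < length js" using lxs by simp
      have jk: "js ! k \<in> set js" using k' by simp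
      then have jk': "js ! k < n" "js ! k \<noteq> c0" using setjs by auto
      have "lin_comb c xs (js ! k) = (\<Sum>i<length xs. (if i = k then c i else 0))"
        unfolding lin_comb_def
      proof (rule sum.cong)
        fix i assume "i \<in> {..<length xs}"
        then have i: "i < length js" using lxs by simp
        have "js ! k = js ! i \<longleftrightarrow> k = i" using nth_eq_iff_index_eq[OF djs k' i] .
        then show "c i * (xs ! i $ (js ! k)) = (if i = k then c i else 0)"
          using xsi[OF i] jk' unfolding b_def by auto
      qed simp
      also have "\<dots> = c k" using k by simp
      finally show "c k = 0" using lc jk' by simp
    qed
    show "\<forall>y\<in>carrier_vec n. A *\<^sub>v y = 0\<^sub>v m \<longrightarrow>
        (\<exists>d c. d \<noteq> 0 \<and> (\<forall>j<n. d * y $ j = lin_comb c xs j))"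
    proof (intro ballI impI)
      fix y :: "'a poly vec" assume y: "y \<in> carrier_vec n" and Ay: "A *\<^sub>v y = 0\<^sub>v m"
      then have Sy: "S y = 0" using null by simp
      have "1 * y $ t = lin_comb (\<lambda>i. y $ (js ! i)) xs t" if t: "t < n" for t
      proof -
        have "lin_comb (\<lambda>i. y $ (js ! i)) xs t = (\<Sum>i<length js. y $ (js ! i) * (b (js ! i) $ t))"
          unfolding lin_comb_def lxs using xsi by simp
        also have "\<dots> = (\<Sum>j\<in>set js. y $ j * (b j $ t))"
          by (rule sum_nth_distinct[OF djs, of "\<lambda>j. y $ j * (b j $ t)"])
        also have "\<dots> = y $ t"
        proof (cases "t = c0")
          case False
          have "(\<Sum>j\<in>set js. y $ j * (b j $ t)) = (\<Sum>j\<in>set js. if j = t then y $ t else 0)"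
          proof (rule sum.cong)
            fix j assume "j \<in> set js"
            then show "y $ j * (b j $ t) = (if j = t then y $ t else 0)"
              unfolding b_def using t False by auto
          qed simp
          also have "\<dots> = y $ t" using t False setjs by simp
          finally show ?thesis .
        next
          case True
          have "(\<Sum>j\<in>set js. y $ j * (b j $ t)) = (\<Sum>j\<in>set js. smult (- inverse (u c0)) (smult (u j) (y $ j)))"
          proof (rule sum.cong)
            fix j assume "j \<in> set js"
            then have "j \<noteq> c0" using setjs by auto
            then show "y $ j * (b j $ t) = smult (- inverse (u c0)) (smult (u j) (y $ j))"
              unfolding b_def using t True by (simp add: field_simps)
          qed simp
          also have "\<dots> = smult (- inverse (u c0)) (\<Sum>j\<in>set js. smult (u j) (y $ j))"
            by (simp add: smult_sum_right)
          also have "(\<Sum>j\<in>set js. smult (u j) (y $ j)) = - smult (u c0) (y $ c0)"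
          proof -
            have "S y = smult (u c0) (y $ c0) + (\<Sum>j\<in>{0..<n} - {c0}. smult (u j) (y $ j))"
              unfolding S_def using uv(1) by (simp add: sum.remove)
            then show ?thesis using Sy setjs by (simp add: eq_neg_iff_add_eq_0 add.commute)
          qed
          finally show ?thesis using True uv(3) by simp
        qed
        finally show ?thesis by simp
      qed
      then show "\<exists>d c. d \<noteq> 0 \<and> (\<forall>j<n. d * y $ j = lin_comb c xs j)"
        by (intro exI[of _ 1] exI[of _ "\<lambda>i. y $ (js ! i)"]) simp
    qed
  qed
  have sum0: "(\<Sum>x\<leftarrow>xs. vec_degree x) = 0" unfolding xs_def using vd by simp
  show ?thesis
  proof
    assume "has_pos_column_minimal_index A"
    then obtain M e where M: "M \<in> column_minimal_indices A" "e \<in># M" "e > 0"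
      unfolding has_pos_column_minimal_index_def by blast
    then obtain ys where ys: "M = mset (map vec_degree ys)" "right_minimal_basis A ys"
      unfolding column_minimal_indices_def by blast
    then have "(\<Sum>y\<leftarrow>ys. vec_degree y) \<le> 0" using basis sum0 unfolding right_minimal_basis_def by metis
    then have "\<forall>x\<in>set (map vec_degree ys). x = 0" by simp
    moreover have "e \<in> set (map vec_degree ys)" using M(2) ys(1) by simp
    ultimately have "e = 0" by (rule bspec)
    then show False using M(3) by simp
  qed
qed

lemma vecs_formA:
  fixes P :: "'a::field poly mat"
  assumes P: "P \<in> carrier_mat p q" and A: "formA (\<lambda>i j. P $$ (i,j)) p q"
  shows "\<exists>u v. u \<in> carrier_vec p \<and> u \<noteq> 0\<^sub>v p \<and>
         v \<in> carrier_vec q \<and> is_vec_pencil v \<and> v \<noteq> 0\<^sub>v q \<and>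
         P = outer (const_vec u) v"
proof -
  obtain u v i0 j0 where uv: "i0 < p" "j0 < q" "u i0 \<noteq> 0" "v j0 \<noteq> 0"
    "\<forall>j<q. degree (v j) \<le> 1" "\<forall>i<p. \<forall>j<q. P $$ (i,j) = smult (u i) (v j)"
    using A unfolding formA_def by blast
  define U where "U = vec p u"
  define V where "V = vec q v"
  have 1: "U \<in> carrier_vec p" "V \<in> carrier_vec q" unfolding U_def V_def by auto
  have 2: "U \<noteq> 0\<^sub>v p"
  proof
    assume "U = 0\<^sub>v p"
    then have "U $ i0 = 0" using uv(1) by simp
    then show False using uv(1,3) unfolding U_def by simp
  qed
  have 3: "V \<noteq> 0\<^sub>v q"
  proof
    assume "V = 0\<^sub>v q"
    then have "V $ j0 = 0" using uv(2) by simp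
    then show False using uv(2,4) unfolding V_def by simp
  qed
  have 4: "is_vec_pencil V" unfolding is_vec_pencil_def V_def using uv(5) by simp
  have 5: "P = outer (const_vec U) V"
  proof (rule eq_matI)
    fix i j assume ij: "i < dim_row (outer (const_vec U) V)" "j < dim_col (outer (const_vec U) V)"
    then have "i < p" "j < q" unfolding outer_def const_vec_def U_def V_def by auto
    then show "P $$ (i,j) = outer (const_vec U) V $$ (i,j)"
      unfolding outer_def const_vec_def U_def V_def using uv(6) by simp
  qed (use P in \<open>auto simp: outer_def const_vec_def U_def V_def\<close>)
  show ?thesis using 1 2 3 4 5 by blast
qed

lemma vecs_formB:
  fixes P :: "'a::field poly mat"
  assumes P: "P \<in> carrier_mat p q" and B: "formB (\<lambda>i j. P $$ (i,j)) p q"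
  shows "\<exists>u v. v \<in> carrier_vec q \<and> v \<noteq> 0\<^sub>v q \<and>
         u \<in> carrier_vec p \<and> is_vec_pencil u \<and> u \<noteq> 0\<^sub>v p \<and>
         P = outer u (const_vec v)"
proof -
  obtain u v i0 j0 where uv: "i0 < q" "j0 < p" "u i0 \<noteq> 0" "v j0 \<noteq> 0"
    "\<forall>j<p. degree (v j) \<le> 1" "\<forall>i<q. \<forall>j<p. P $$ (j,i) = smult (u i) (v j)"
    using B unfolding formB_def formA_def by blast
  define U where "U = vec p v"
  define V where "V = vec q u"
  have 1: "U \<in> carrier_vec p" "V \<in> carrier_vec q" unfolding U_def V_def by auto
  have 2: "U \<noteq> 0\<^sub>v p"
  proof
    assume "U = 0\<^sub>v p"
    then have "U $ j0 = 0" using uv(2) by simp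
    then show False using uv(2,4) unfolding U_def by simp
  qed
  have 3: "V \<noteq> 0\<^sub>v q"
  proof
    assume "V = 0\<^sub>v q"
    then have "V $ i0 = 0" using uv(1) by simp
    then show False using uv(1,3) unfolding V_def by simp
  qed
  have 4: "is_vec_pencil U" unfolding is_vec_pencil_def U_def using uv(5) by simp
  have 5: "P = outer U (const_vec V)"
  proof (rule eq_matI)
    fix i j assume ij: "i < dim_row (outer U (const_vec V))" "j < dim_col (outer U (const_vec V))"
    then have "i < p" "j < q" unfolding outer_def const_vec_def U_def V_def by auto
    then show "P $$ (i,j) = outer U (const_vec V) $$ (i,j)"
      unfolding outer_def const_vec_def U_def V_def using uv(6) by simp
  qed (use P in \<open>auto simp: outer_def const_vec_def U_def V_def\<close>)
  show ?thesis using 1 2 3 4 5 by blast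
qed

lemma vecs_formAB:
  fixes P :: "'a::field poly mat"
  assumes P: "P \<in> carrier_mat p q" and AB: "formAB (\<lambda>i j. P $$ (i,j)) p q"
  shows "\<exists>u vb ub v. u \<in> carrier_vec p \<and> u \<noteq> 0\<^sub>v p \<and> vb \<in> carrier_vec q \<and> vb \<noteq> 0\<^sub>v q \<and>
         ub \<in> carrier_vec p \<and> is_vec_pencil ub \<and> ub \<noteq> 0\<^sub>v p \<and>
         v \<in> carrier_vec q \<and> is_vec_pencil v \<and> v \<noteq> 0\<^sub>v q \<and>
         P = outer (const_vec u) v \<and> P = outer ub (const_vec vb)"
proof -
  obtain u v ub vb where H: "\<forall>i<p. \<forall>j<q. P $$ (i,j) = smult (u i) (v j) \<and> P $$ (i,j) = smult (vb j) (ub i)"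
     "\<exists>i0<p. u i0 \<noteq> 0" "\<exists>i0<p. ub i0 \<noteq> 0" "\<exists>j0<q. vb j0 \<noteq> 0" "\<exists>j0<q. v j0 \<noteq> 0"
     "\<forall>i<p. degree (ub i) \<le> 1" "\<forall>j<q. degree (v j) \<le> 1" using AB unfolding formAB_def by blast
  define U where "U = vec p u"
  define V where "V = vec q v"
  define UB where "UB = vec p ub"
  define VB where "VB = vec q vb"
  have c: "U \<in> carrier_vec p" "V \<in> carrier_vec q" "UB \<in> carrier_vec p" "VB \<in> carrier_vec q"
    unfolding U_def V_def UB_def VB_def by auto
  have nz: "vec n g \<noteq> 0\<^sub>v n" if ex: "\<exists>i<n. g i \<noteq> 0" for n and g :: "nat \<Rightarrow> 'b::zero"
  proof
    assume "vec n g = 0\<^sub>v n"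
    moreover obtain i where "i < n" "g i \<noteq> 0" using ex by blast
    ultimately show False by (metis index_vec index_zero_vec(1))
  qed
  have n: "U \<noteq> 0\<^sub>v p" "V \<noteq> 0\<^sub>v q" "UB \<noteq> 0\<^sub>v p" "VB \<noteq> 0\<^sub>v q"
    unfolding U_def V_def UB_def VB_def using nz H(2-5) by auto
  have pen: "is_vec_pencil UB" "is_vec_pencil V"
    unfolding is_vec_pencil_def UB_def V_def using H(6,7) by auto
  have e1: "P = outer (const_vec U) V"
  proof (rule eq_matI)
    fix i j assume ij: "i < dim_row (outer (const_vec U) V)" "j < dim_col (outer (const_vec U) V)"
    then have "i < p" "j < q" unfolding outer_def const_vec_def U_def V_def by auto
    then show "P $$ (i,j) = outer (const_vec U) V $$ (i,j)"
      unfolding outer_def const_vec_def U_def V_def using H(1) by simp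
  qed (use P in \<open>auto simp: outer_def const_vec_def U_def V_def\<close>)
  have e2: "P = outer UB (const_vec VB)"
  proof (rule eq_matI)
    fix i j assume ij: "i < dim_row (outer UB (const_vec VB))" "j < dim_col (outer UB (const_vec VB))"
    then have ij': "i < p" "j < q" unfolding outer_def const_vec_def UB_def VB_def by auto
    have h: "P $$ (i,j) = smult (vb j) (ub i)" using conjunct2[OF H(1)[rule_format, OF ij']] .
    show "P $$ (i,j) = outer UB (const_vec VB) $$ (i,j)"
      unfolding outer_def const_vec_def UB_def VB_def using ij' h by simp
  qed (use P in \<open>auto simp: outer_def const_vec_def UB_def VB_def\<close>)
  show ?thesis
    by (rule exI[of _ U], rule exI[of _ VB], rule exI[of _ UB], rule exI[of _ V])
      (intro conjI; fact)
qed

lemma vecs_formC: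
  fixes P :: "'a::field poly mat"
  assumes P: "P \<in> carrier_mat p q" and C: "formC (\<lambda>i j. P $$ (i,j)) p q"
  shows "\<exists>u v. u \<in> carrier_vec p \<and> u \<noteq> 0\<^sub>v p \<and> v \<in> carrier_vec q \<and> v \<noteq> 0\<^sub>v q \<and>
         P = outer (const_vec u) (const_vec v)"
proof -
  obtain u w i0 j0 where H: "i0 < p" "j0 < q" "u i0 \<noteq> 0" "w j0 \<noteq> 0"
     "\<forall>i<p. \<forall>j<q. P $$ (i,j) = [:u i * w j:]" using C unfolding formC_def by blast
  define U where "U = vec p u"
  define V where "V = vec q w"
  have c: "U \<in> carrier_vec p" "V \<in> carrier_vec q" unfolding U_def V_def by auto
  have n1: "U \<noteq> 0\<^sub>v p"
  proof
    assume "U = 0\<^sub>v p"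
    then have "U $ i0 = 0" using H(1) by simp
    then show False using H(1,3) unfolding U_def by simp
  qed
  have n2: "V \<noteq> 0\<^sub>v q"
  proof
    assume "V = 0\<^sub>v q"
    then have "V $ j0 = 0" using H(2) by simp
    then show False using H(2,4) unfolding V_def by simp
  qed
  have e: "P = outer (const_vec U) (const_vec V)"
  proof (rule eq_matI)
    fix i j assume ij: "i < dim_row (outer (const_vec U) (const_vec V))" "j < dim_col (outer (const_vec U) (const_vec V))"
    then have "i < p" "j < q" unfolding outer_def const_vec_def U_def V_def by auto
    then show "P $$ (i,j) = outer (const_vec U) (const_vec V) $$ (i,j)"
      unfolding outer_def const_vec_def U_def V_def using H(5) by simp
  qed (use P in \<open>auto simp: outer_def const_vec_def U_def V_def\<close>)
  show ?thesis using c n1 n2 e by blast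
qed

lemma minors1_deg:
  fixes P :: "'a::field poly mat"
  assumes "\<And>i j. i < dim_row P \<Longrightarrow> j < dim_col P \<Longrightarrow> degree (P $$ (i,j)) \<le> 1"
  shows "\<forall>s\<in>minors P 1. degree s \<le> 1"
  using assms unfolding minors_1 by auto

lemma part1_P:
  fixes P :: "'a::field poly mat"
  assumes P: "P \<in> carrier_mat p q" and pen: "is_pencil P" and nr: "normal_rank P = 1"
    and h: "has_nontrivial_invariant_factor P"
  shows "formAB (\<lambda>i j. P $$ (i,j)) p q"
proof -
  have "degree (invariant_factor P 1) > 0" using h nr unfolding has_nontrivial_invariant_factor_def by auto
  then have dd: "degree (det_divisor P 1) > 0" unfolding invariant_factor_1 .
  have deg: "\<forall>s\<in>minors P 1. degree s \<le> 1"
    by (rule minors1_deg) (use pen in \<open>auto simp: is_pencil_def\<close>)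
  have "lead_coeff (det_divisor P 1) = 1 \<and> (\<forall>m\<in>minors P 1. det_divisor P 1 dvd m)"
    by (rule det_divisor_props[OF deg nr_eq1(2)[OF nr]])
  then have dv: "det_divisor P 1 dvd P $$ (i,j)" if "i < p" "j < q" for i j
    using that P unfolding minors_1 by auto
  consider "formA (\<lambda>i j. P $$ (i,j)) p q" | "formB (\<lambda>i j. P $$ (i,j)) p q"
    using struct_P[OF P pen nr] by blast
  then show ?thesis
  proof cases
    case 1
    then show ?thesis using part1_fun[OF _ dv dd] by simp
  next
    case 2
    then have "formA (\<lambda>i j. P $$ (j,i)) q p" unfolding formB_def .
    then have "formAB (\<lambda>i j. P $$ (j,i)) q p" by (rule part1_fun[OF _ _ dd]) (use dv in blast)
    then show ?thesis by (rule formAB_sym)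
  qed
qed

lemma part2_P:
  fixes P :: "'a::field poly mat"
  assumes P: "P \<in> carrier_mat p q" and pen: "is_pencil P" and nr: "normal_rank P = 1"
    and h: "has_infinite_elementary_divisor P"
  shows "formC (\<lambda>i j. P $$ (i,j)) p q"
proof -
  define R where "R = rev_pencil P"
  have R: "R \<in> carrier_mat p q" unfolding R_def rev_pencil_def using P by simp
  have Re: "R $$ (i,j) = [:coeff (P $$ (i,j)) 1, coeff (P $$ (i,j)) 0:]" if "i < p" "j < q" for i j
    unfolding R_def rev_pencil_def using that P by simp
  have st: "formA (\<lambda>i j. P $$ (i,j)) p q \<or> formB (\<lambda>i j. P $$ (i,j)) p q"
    using struct_P[OF P pen nr] .
  have prod: "\<exists>x y. \<forall>i<p. \<forall>j<q. R $$ (i,j) = x i * y j"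
    using st
  proof
    assume "formA (\<lambda>i j. P $$ (i,j)) p q"
    then obtain u v where uv: "\<forall>i<p. \<forall>j<q. P $$ (i,j) = smult (u i) (v j)"
      unfolding formA_def by blast
    have G: "\<forall>i<p. \<forall>j<q. R $$ (i,j) = [:u i:] * [:coeff (v j) 1, coeff (v j) 0:]"
      using uv Re by simp
    show ?thesis
      by (rule exI[of _ "\<lambda>i. [:u i:]"], rule exI[of _ "\<lambda>j. [:coeff (v j) 1, coeff (v j) 0:]"]) (use G in simp)
  next
    assume "formB (\<lambda>i j. P $$ (i,j)) p q"
    then obtain u v where uv: "\<forall>i<q. \<forall>j<p. P $$ (j,i) = smult (u i) (v j)"
      unfolding formB_def formA_def by blast
    have G: "\<forall>i<p. \<forall>j<q. R $$ (i,j) = [:coeff (v i) 1, coeff (v i) 0:] * [:u j:]"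
      using uv Re by simp
    show ?thesis
      by (rule exI[of _ "\<lambda>i. [:coeff (v i) 1, coeff (v i) 0:]"], rule exI[of _ "\<lambda>j. [:u j:]"]) (use G in simp)
  qed
  then obtain x y where xy: "\<forall>i<p. \<forall>j<q. R $$ (i,j) = x i * y j" by blast
  have z: "m = 0" if "k \<ge> 2" "m \<in> minors R k" for k m
    by (rule outer_minors[of R x y k m]) (use xy R that in auto)
  obtain k where k: "k \<in> {1..normal_rank R}" "[:0, 1:] dvd invariant_factor R k"
    using h unfolding has_infinite_elementary_divisor_def R_def by blast
  have nrR: "normal_rank R = 1" "\<not> minors R 1 \<subseteq> {0}" using nr_le1[OF z] k(1) by auto
  then have k1: "k = 1" using k(1) by simp
  have deg: "\<forall>s\<in>minors R 1. degree s \<le> 1"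
    by (rule minors1_deg) (use R Re in auto)
  have "lead_coeff (det_divisor R 1) = 1 \<and> (\<forall>m\<in>minors R 1. det_divisor R 1 dvd m)"
    by (rule det_divisor_props[OF deg nrR(2)])
  moreover have "[:0, 1:] dvd det_divisor R 1"
  proof -
    have "[:0, 1:] dvd invariant_factor R 1" using k(2) k1 by simp
    then show ?thesis unfolding invariant_factor_1 .
  qed
  ultimately have "[:0, 1:] dvd R $$ (i,j)" if "i < p" "j < q" for i j
    using that R unfolding minors_1 by (auto intro: dvd_trans)
  then have c1: "coeff (P $$ (i,j)) 1 = 0" if "i < p" "j < q" for i j
  proof -
    have "[:-0, 1:] dvd R $$ (i,j)" using \<open>i < p \<Longrightarrow> j < q \<Longrightarrow> [:0, 1:] dvd R $$ (i,j)\<close> that by simp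
    then have "poly (R $$ (i,j)) 0 = 0" by (simp only: poly_eq_0_iff_dvd)
    then show ?thesis using Re[OF that] by simp
  qed
  show ?thesis using st
  proof
    assume "formA (\<lambda>i j. P $$ (i,j)) p q"
    then show ?thesis using part2_fun c1 by blast
  next
    assume "formB (\<lambda>i j. P $$ (i,j)) p q"
    then have "formA (\<lambda>i j. P $$ (j,i)) q p" unfolding formB_def .
    then have "formC (\<lambda>i j. P $$ (j,i)) q p" by (rule part2_fun) (use c1 in blast)
    then show ?thesis by (rule formC_sym)
  qed
qed

theorem proposition2p1:
  fixes P :: "'a::field poly mat" and p q :: nat
  assumes "P \<in> carrier_mat p q" and "is_pencil P" and "normal_rank P = 1"
  shows
   "(has_nontrivial_invariant_factor P \<longrightarrow>
      (\<exists>u vb ub v. u \<in> carrier_vec p \<and> u \<noteq> 0\<^sub>v p \<and> vb \<in> carrier_vec q \<and> vb \<noteq> 0\<^sub>v q \<and>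
         ub \<in> carrier_vec p \<and> is_vec_pencil ub \<and> ub \<noteq> 0\<^sub>v p \<and>
         v \<in> carrier_vec q \<and> is_vec_pencil v \<and> v \<noteq> 0\<^sub>v q \<and>
         P = outer (const_vec u) v \<and> P = outer ub (const_vec vb))) \<and>
    (has_infinite_elementary_divisor P \<longrightarrow>
      (\<exists>u v. u \<in> carrier_vec p \<and> u \<noteq> 0\<^sub>v p \<and> v \<in> carrier_vec q \<and> v \<noteq> 0\<^sub>v q \<and>
         P = outer (const_vec u) (const_vec v))) \<and>
    (has_pos_column_minimal_index P \<longrightarrow>
      (\<exists>u v. u \<in> carrier_vec p \<and> u \<noteq> 0\<^sub>v p \<and>
         v \<in> carrier_vec q \<and> is_vec_pencil v \<and> v \<noteq> 0\<^sub>v q \<and>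
         P = outer (const_vec u) v)) \<and>
    (has_pos_row_minimal_index P \<longrightarrow>
      (\<exists>u v. v \<in> carrier_vec q \<and> v \<noteq> 0\<^sub>v q \<and>
         u \<in> carrier_vec p \<and> is_vec_pencil u \<and> u \<noteq> 0\<^sub>v p \<and>
         P = outer u (const_vec v)))"
proof (intro conjI impI)
  note P = assms(1) and pen = assms(2) and nr = assms(3)
  have st: "formA (\<lambda>i j. P $$ (i,j)) p q \<or> formB (\<lambda>i j. P $$ (i,j)) p q"
    using struct_P[OF P pen nr] .
  show "\<exists>u vb ub v. u \<in> carrier_vec p \<and> u \<noteq> 0\<^sub>v p \<and> vb \<in> carrier_vec q \<and> vb \<noteq> 0\<^sub>v q \<and>
         ub \<in> carrier_vec p \<and> is_vec_pencil ub \<and> ub \<noteq> 0\<^sub>v p \<and>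
         v \<in> carrier_vec q \<and> is_vec_pencil v \<and> v \<noteq> 0\<^sub>v q \<and>
         P = outer (const_vec u) v \<and> P = outer ub (const_vec vb)"
    if "has_nontrivial_invariant_factor P"
    by (rule vecs_formAB[OF P part1_P[OF P pen nr that]])
  show "\<exists>u v. u \<in> carrier_vec p \<and> u \<noteq> 0\<^sub>v p \<and> v \<in> carrier_vec q \<and> v \<noteq> 0\<^sub>v q \<and>
         P = outer (const_vec u) (const_vec v)"
    if "has_infinite_elementary_divisor P"
    by (rule vecs_formC[OF P part2_P[OF P pen nr that]])
  show "\<exists>u v. u \<in> carrier_vec p \<and> u \<noteq> 0\<^sub>v p \<and>
         v \<in> carrier_vec q \<and> is_vec_pencil v \<and> v \<noteq> 0\<^sub>v q \<and>
         P = outer (const_vec u) v"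
    if hc: "has_pos_column_minimal_index P"
  proof (cases "formA (\<lambda>i j. P $$ (i,j)) p q")
    case True
    then show ?thesis by (rule vecs_formA[OF P])
  next
    case False
    then have "formB (\<lambda>i j. P $$ (i,j)) p q" using st by simp
    then have "\<not> has_pos_column_minimal_index P" by (rule L[OF P])
    then show ?thesis using hc by simp
  qed
  show "\<exists>u v. v \<in> carrier_vec q \<and> v \<noteq> 0\<^sub>v q \<and>
         u \<in> carrier_vec p \<and> is_vec_pencil u \<and> u \<noteq> 0\<^sub>v p \<and>
         P = outer u (const_vec v)"
    if hr: "has_pos_row_minimal_index P"
  proof (cases "formB (\<lambda>i j. P $$ (i,j)) p q")
    case True
    then show ?thesis by (rule vecs_formB[OF P])
  next
    case False
    then have A: "formA (\<lambda>i j. P $$ (i,j)) p q" using st by simp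
    have PT: "transpose_mat P \<in> carrier_mat q p" using P by simp
    have "formA (\<lambda>i j. transpose_mat P $$ (j,i)) p q"
      by (rule formA_cong[OF A]) (use P in simp)
    then have "formB (\<lambda>i j. transpose_mat P $$ (i,j)) q p" unfolding formB_def .
    then have "\<not> has_pos_column_minimal_index (transpose_mat P)" by (rule L[OF PT])
    then show ?thesis using hr unfolding has_pos_row_minimal_index_def has_pos_column_minimal_index_def
      row_minimal_indices_def by simp
  qed
qed

end
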